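(* Let $a>0$, $b,c\ge 0$, and consider the system $$\dot x=x(1-y+cx-axz),\qquad \dot y=y(-1+x),\qquad \dot z=z(-b+ax^2).$$ Let $f$ be an irreducible Darboux polynomial of degree greater than one with non-zero cofactor $$K=\alpha_0+\alpha_1x+\alpha_2y+\alpha_3z+\alpha_4x^2+\alpha_5xy+\alpha_6xz+\alpha_7y^2+\alpha_8yz+\alpha_9z^2,\quad \alpha_i\in\mathbb{C}.$$ Then $\alpha_5=\alpha_7=\alpha_8=\alpha_9=0$, and $\alpha_4=N_4a$, $\alpha_6=-N_6a$ for some $N_4,N_6\in\mathbb{N}\cup\{0\}$.
   Context: A Darboux polynomial is $f\in\mathbb{C}[x,y,z]$ with $x(1-y+cx-axz)f_x+y(-1+x)f_y+z(-b+ax^2)f_z=Kf$ for a polynomial cofactor $K$ of degree at most two. *)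

theory Defs
  imports "HOL-Computational_Algebra.Polynomial_Factorial"
begin

text \<open>Polynomials in C[x,y,z] are represented as complex poly poly poly:
  outermost variable z, middle variable y, innermost variable x.\<close>

type_synonym cpoly3 = "complex poly poly poly"

definition cX :: cpoly3 where "cX = [:[:[:0, 1:]:]:]"
definition cY :: cpoly3 where "cY = [:[:0, 1:]:]"
definition cZ :: cpoly3 where "cZ = [:0, 1:]"
definition cC :: "complex \<Rightarrow> cpoly3" where "cC r = [:[:[:r:]:]:]"

definition dX :: "cpoly3 \<Rightarrow> cpoly3" where "dX f = map_poly (map_poly pderiv) f"
definition dY :: "cpoly3 \<Rightarrow> cpoly3" where "dY f = map_poly pderiv f"
definition dZ :: "cpoly3 \<Rightarrow> cpoly3" where "dZ f = pderiv f"

definition mcoeff :: "cpoly3 \<Rightarrow> nat \<Rightarrow> nat \<Rightarrow> nat \<Rightarrow> complex" where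
  "mcoeff f i j k = coeff (coeff (coeff f k) j) i"

definition total_degree :: "cpoly3 \<Rightarrow> nat" where
  "total_degree f = (if f = 0 then 0
     else Max {i + j + k | i j k. mcoeff f i j k \<noteq> 0})"

definition darboux_eq :: "real \<Rightarrow> real \<Rightarrow> real \<Rightarrow> cpoly3 \<Rightarrow> cpoly3 \<Rightarrow> bool" where
  "darboux_eq a b c f K \<longleftrightarrow>
     cX * (1 - cY + cC (of_real c) * cX - cC (of_real a) * cX * cZ) * dX f
     + cY * (-1 + cX) * dY f
     + cZ * (- cC (of_real b) + cC (of_real a) * cX ^ 2) * dZ f
     = K * f"

end

theory Submission
  imports Defs
begin

lemma mc_add[simp]: "mcoeff (g + h) i j k = mcoeff g i j k + mcoeff h i j k"
  by (simp add: mcoeff_def)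
lemma mc_diff[simp]: "mcoeff (g - h) i j k = mcoeff g i j k - mcoeff h i j k"
  by (simp add: mcoeff_def)
lemma mc_uminus[simp]: "mcoeff (- g) i j k = - mcoeff g i j k"
  by (simp add: mcoeff_def)
lemma mc_C[simp]: "mcoeff (cC r * g) i j k = r * mcoeff g i j k"
  by (simp add: mcoeff_def cC_def)
lemma mc_Z[simp]: "mcoeff (cZ * g) i j k = (if k = 0 then 0 else mcoeff g i j (k - 1))"
  by (cases k) (simp_all add: mcoeff_def cZ_def coeff_pCons)
lemma mc_Y[simp]: "mcoeff (cY * g) i j k = (if j = 0 then 0 else mcoeff g i (j - 1) k)"
  by (cases j) (simp_all add: mcoeff_def cY_def coeff_pCons)
lemma mc_X[simp]: "mcoeff (cX * g) i j k = (if i = 0 then 0 else mcoeff g (i - 1) j k)"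
  by (cases i) (simp_all add: mcoeff_def cX_def coeff_pCons)
lemma mc_dX[simp]: "mcoeff (dX g) i j k = of_nat (Suc i) * mcoeff g (Suc i) j k"
  by (simp add: mcoeff_def dX_def coeff_map_poly coeff_pderiv)
lemma mc_dY[simp]: "mcoeff (dY g) i j k = of_nat (Suc j) * mcoeff g i (Suc j) k"
  by (simp add: mcoeff_def dY_def coeff_map_poly coeff_pderiv of_nat_poly)
lemma mc_dZ[simp]: "mcoeff (dZ g) i j k = of_nat (Suc k) * mcoeff g i j (Suc k)"
  by (simp add: mcoeff_def dZ_def coeff_pderiv of_nat_poly)

lemma lhs_expand: "cX * (1 - cY + cC c * cX - cC a * cX * cZ) * dX f
     + cY * (-1 + cX) * dY f
     + cZ * (- cC b + cC a * cX ^ 2) * dZ f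
   = cX*dX f - cY*(cX*dX f) + cC c*(cX*(cX*dX f)) - cC a*(cX*(cX*(cZ*dX f))) - cY*dY f
     + cX*(cY*dY f) - cC b*(cZ*dZ f) + cC a*(cX*(cX*(cZ*dZ f)))"
  by (simp add: algebra_simps power2_eq_square)

lemma K_expand: "(cC \<alpha>0 + cC \<alpha>1 * cX + cC \<alpha>2 * cY + cC \<alpha>3 * cZ
           + cC \<alpha>4 * cX ^ 2 + cC \<alpha>5 * cX * cY + cC \<alpha>6 * cX * cZ
           + cC \<alpha>7 * cY ^ 2 + cC \<alpha>8 * cY * cZ + cC \<alpha>9 * cZ ^ 2) * f
  = cC \<alpha>0 * f + cC \<alpha>1 * (cX * f) + cC \<alpha>2 * (cY * f) + cC \<alpha>3 * (cZ * f)
   + cC \<alpha>4 * (cX * (cX * f)) + cC \<alpha>5 * (cX * (cY * f)) + cC \<alpha>6 * (cX * (cZ * f))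
   + cC \<alpha>7 * (cY * (cY * f)) + cC \<alpha>8 * (cY * (cZ * f)) + cC \<alpha>9 * (cZ * (cZ * f))"
  by (simp add: algebra_simps power2_eq_square)

lemma coeff_eq:
  assumes "darboux_eq a b c f K"
    and "K = cC \<alpha>0 + cC \<alpha>1 * cX + cC \<alpha>2 * cY + cC \<alpha>3 * cZ
           + cC \<alpha>4 * cX ^ 2 + cC \<alpha>5 * cX * cY + cC \<alpha>6 * cX * cZ
           + cC \<alpha>7 * cY ^ 2 + cC \<alpha>8 * cY * cZ + cC \<alpha>9 * cZ ^ 2"
  shows "mcoeff (cX*dX f - cY*(cX*dX f) + cC c*(cX*(cX*dX f)) - cC a*(cX*(cX*(cZ*dX f))) - cY*dY f
     + cX*(cY*dY f) - cC b*(cZ*dZ f) + cC a*(cX*(cX*(cZ*dZ f)))) i j k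
   = mcoeff (cC \<alpha>0 * f + cC \<alpha>1 * (cX * f) + cC \<alpha>2 * (cY * f) + cC \<alpha>3 * (cZ * f)
   + cC \<alpha>4 * (cX * (cX * f)) + cC \<alpha>5 * (cX * (cY * f)) + cC \<alpha>6 * (cX * (cZ * f))
   + cC \<alpha>7 * (cY * (cY * f)) + cC \<alpha>8 * (cY * (cZ * f)) + cC \<alpha>9 * (cZ * (cZ * f))) i j k"
  using assms(1) unfolding darboux_eq_def lhs_expand assms(2) K_expand by (rule arg_cong)


lemma least_ex: "P (x::nat) \<Longrightarrow> \<exists>m. P m \<and> (\<forall>y. P y \<longrightarrow> m \<le> y)"
  by (rule exI[of _ "LEAST m. P m"]) (auto intro: LeastI Least_le)

lemma mc_bound:
  assumes "mcoeff f i j k \<noteq> 0"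
  shows "i + j + k \<le> (\<Sum>k'\<le>degree f. \<Sum>j'\<le>(\<Sum>k''\<le>degree f. degree (coeff f k'')). degree (coeff (coeff f k') j'))
      + (\<Sum>k''\<le>degree f. degree (coeff f k'')) + degree f"
proof -
  let ?D2 = "\<Sum>k''\<le>degree f. degree (coeff f k'')"
  have c3: "coeff (coeff (coeff f k) j) i \<noteq> 0" using assms by (simp add: mcoeff_def)
  hence c2: "coeff (coeff f k) j \<noteq> 0" by auto
  hence c1: "coeff f k \<noteq> 0" by auto
  have k: "k \<le> degree f" using c1 le_degree by blast
  have "j \<le> degree (coeff f k)" using c2 le_degree by blast
  also have "\<dots> \<le> ?D2" using k by (intro member_le_sum) auto
  finally have j: "j \<le> ?D2" .
  have "i \<le> degree (coeff (coeff f k) j)" using c3 le_degree by blast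
  also have "\<dots> \<le> (\<Sum>j'\<le>?D2. degree (coeff (coeff f k) j'))" using j by (intro member_le_sum) auto
  also have "\<dots> \<le> (\<Sum>k'\<le>degree f. \<Sum>j'\<le>?D2. degree (coeff (coeff f k') j'))"
    using k by (intro member_le_sum[where f="\<lambda>k'. \<Sum>j'\<le>?D2. degree (coeff (coeff f k') j')"]) auto
  finally show ?thesis using j k by linarith
qed

lemma total_degree_props:
  assumes "f \<noteq> 0"
  shows "\<And>i j k. mcoeff f i j k \<noteq> 0 \<Longrightarrow> i + j + k \<le> total_degree f"
    and "\<exists>i j k. mcoeff f i j k \<noteq> 0 \<and> i + j + k = total_degree f"
proof -
  let ?S = "{i + j + k | i j k. mcoeff f i j k \<noteq> 0}"
  have fin: "finite ?S"
    by (rule finite_subset[of _ "{..(\<Sum>k'\<le>degree f. \<Sum>j'\<le>(\<Sum>k''\<le>degree f. degree (coeff f k'')). degree (coeff (coeff f k') j'))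
      + (\<Sum>k''\<le>degree f. degree (coeff f k'')) + degree f}"]) (auto dest: mc_bound)
  have ne: "mcoeff f (degree (coeff (coeff f (degree f)) (degree (coeff f (degree f))))) (degree (coeff f (degree f))) (degree f) \<noteq> 0"
    using assms by (simp add: mcoeff_def)
  hence ne': "?S \<noteq> {}" by blast
  have td: "total_degree f = Max ?S" using assms by (simp add: total_degree_def)
  show "\<And>i j k. mcoeff f i j k \<noteq> 0 \<Longrightarrow> i + j + k \<le> total_degree f"
    unfolding td using fin by (intro Max_ge) auto
  have "Max ?S \<in> ?S" using fin ne' by (rule Max_in)
  thus "\<exists>i j k. mcoeff f i j k \<noteq> 0 \<and> i + j + k = total_degree f" unfolding td by (smt (verit) mem_Collect_eq)
qed


theorem lemma4p2:
  fixes a b c :: real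
    and \<alpha>0 \<alpha>1 \<alpha>2 \<alpha>3 \<alpha>4 \<alpha>5 \<alpha>6 \<alpha>7 \<alpha>8 \<alpha>9 :: complex
    and f K :: cpoly3
  assumes "a > 0" and "b \<ge> 0" and "c \<ge> 0"
    and "irreducible f"
    and "total_degree f > 1"
    and "K = cC \<alpha>0 + cC \<alpha>1 * cX + cC \<alpha>2 * cY + cC \<alpha>3 * cZ
           + cC \<alpha>4 * cX ^ 2 + cC \<alpha>5 * cX * cY + cC \<alpha>6 * cX * cZ
           + cC \<alpha>7 * cY ^ 2 + cC \<alpha>8 * cY * cZ + cC \<alpha>9 * cZ ^ 2"
    and "K \<noteq> 0"
    and "darboux_eq a b c f K"
  shows "\<alpha>5 = 0 \<and> \<alpha>7 = 0 \<and> \<alpha>8 = 0 \<and> \<alpha>9 = 0 \<and>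
         (\<exists>N4 N6 :: nat. \<alpha>4 = of_nat N4 * complex_of_real a \<and>
                         \<alpha>6 = - (of_nat N6 * complex_of_real a))"
proof -
  define n where "n = total_degree f"
  have f0: "f \<noteq> 0" using assms(4) by auto
  have E: "\<And>i j k. mcoeff (cX*dX f - cY*(cX*dX f) + cC (of_real c)*(cX*(cX*dX f)) - cC (of_real a)*(cX*(cX*(cZ*dX f))) - cY*dY f
     + cX*(cY*dY f) - cC (of_real b)*(cZ*dZ f) + cC (of_real a)*(cX*(cX*(cZ*dZ f)))) i j k
   = mcoeff (cC \<alpha>0 * f + cC \<alpha>1 * (cX * f) + cC \<alpha>2 * (cY * f) + cC \<alpha>3 * (cZ * f)
   + cC \<alpha>4 * (cX * (cX * f)) + cC \<alpha>5 * (cX * (cY * f)) + cC \<alpha>6 * (cX * (cZ * f))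
   + cC \<alpha>7 * (cY * (cY * f)) + cC \<alpha>8 * (cY * (cZ * f)) + cC \<alpha>9 * (cZ * (cZ * f))) i j k"
    by (rule coeff_eq[OF assms(8) assms(6)])
  note E' = E
  have Z1: "\<And>i j k. n < i + j + k \<Longrightarrow> mcoeff f i j k = 0"
    using total_degree_props(1)[OF f0] unfolding n_def by force
  obtain i00 j00 k00 where "mcoeff f i00 j00 k00 \<noteq> 0" "i00 + j00 + k00 = n"
    using total_degree_props(2)[OF f0] unfolding n_def by blast
  then obtain i0 where i0: "\<exists>j k. mcoeff f i0 j k \<noteq> 0 \<and> i0 + j + k = n"
    and i0m: "\<And>i. (\<exists>j k. mcoeff f i j k \<noteq> 0 \<and> i + j + k = n) \<Longrightarrow> i0 \<le> i"
    using least_ex[of "\<lambda>i. \<exists>j k. mcoeff f i j k \<noteq> 0 \<and> i + j + k = n"] by blast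
  have Z2: "\<And>i j k. i + j + k = n \<Longrightarrow> i < i0 \<Longrightarrow> mcoeff f i j k = 0"
    using i0m by force
  obtain j1 where j1: "\<exists>k. mcoeff f i0 j1 k \<noteq> 0 \<and> i0 + j1 + k = n"
    and j1m: "\<And>j. (\<exists>k. mcoeff f i0 j k \<noteq> 0 \<and> i0 + j + k = n) \<Longrightarrow> j1 \<le> j"
    using least_ex[of "\<lambda>j. \<exists>k. mcoeff f i0 j k \<noteq> 0 \<and> i0 + j + k = n"] i0 by blast
  obtain k1 where k1: "mcoeff f i0 j1 k1 \<noteq> 0" "i0 + j1 + k1 = n" using j1 by blast
  have Z3: "\<And>j k. i0 + j + k = n \<Longrightarrow> j < j1 \<Longrightarrow> mcoeff f i0 j k = 0"
    using j1m by force
  obtain k2 where k2: "\<exists>j. mcoeff f i0 j k2 \<noteq> 0 \<and> i0 + j + k2 = n"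
    and k2m: "\<And>k. (\<exists>j. mcoeff f i0 j k \<noteq> 0 \<and> i0 + j + k = n) \<Longrightarrow> k2 \<le> k"
    using least_ex[of "\<lambda>k. \<exists>j. mcoeff f i0 j k \<noteq> 0 \<and> i0 + j + k = n"] i0 by blast
  obtain j2 where j2: "mcoeff f i0 j2 k2 \<noteq> 0" "i0 + j2 + k2 = n" using k2 by blast
  have Z4: "\<And>j k. i0 + j + k = n \<Longrightarrow> k < k2 \<Longrightarrow> mcoeff f i0 j k = 0"
    using k2m by force
  obtain k3 where k3: "\<exists>i j. mcoeff f i j k3 \<noteq> 0 \<and> i + j + k3 = n"
    and k3m: "\<And>k. (\<exists>i j. mcoeff f i j k \<noteq> 0 \<and> i + j + k = n) \<Longrightarrow> k3 \<le> k"
    using least_ex[of "\<lambda>k. \<exists>i j. mcoeff f i j k \<noteq> 0 \<and> i + j + k = n"] i0 by blast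
  obtain i3 j3 where ij3: "mcoeff f i3 j3 k3 \<noteq> 0" "i3 + j3 + k3 = n" using k3 by blast
  have Z5: "\<And>i j k. i + j + k = n \<Longrightarrow> k < k3 \<Longrightarrow> mcoeff f i j k = 0"
    using k3m by force
  have a9: "\<alpha>9 = 0"
    using E'[of i0 j1 "k1+2"] k1 by (simp cong: if_cong add: Z1 Z2 Z3)
  have a7: "\<alpha>7 = 0"
    using E'[of i0 "j2+2" k2] j2 by (simp cong: if_cong add: Z1 Z2 Z4 a9)
  have a8: "\<alpha>8 = 0"
    using E'[of i0 "j2+1" "k2+1"] j2 by (simp cong: if_cong add: Z1 Z2 Z4 a9 a7)
  have a5: "\<alpha>5 = 0"
    using E'[of "i0+1" "j2+1" k2] j2 by (simp cong: if_cong add: Z1 Z2 Z4 a9 a7 a8)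
  have a6: "\<alpha>6 = - (of_nat i0 * complex_of_real a)"
  proof -
    have "(- (of_nat i0 * complex_of_real a)) * mcoeff f i0 j1 k1 = \<alpha>6 * mcoeff f i0 j1 k1"
    proof -
      have "- (complex_of_real a * (if i0 = 0 then 0 else of_nat i0 * mcoeff f i0 j1 k1)) = \<alpha>6 * mcoeff f i0 j1 k1"
        using E'[of "i0+1" j1 "k1+1"] k1 by (simp cong: if_cong add: Z1 Z2 a9 a7 a8 a5)
      thus ?thesis by (cases "i0 = 0") (simp_all add: mult.assoc mult.left_commute)
    qed
    thus ?thesis using k1(1) by (metis mult_right_cancel mult_minus_left)
  qed
  have a4: "\<alpha>4 = of_nat k3 * complex_of_real a"
  proof -
    have "complex_of_real a * (if k3 = 0 then 0 else of_nat k3 * mcoeff f i3 j3 k3) = \<alpha>4 * mcoeff f i3 j3 k3"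
      using E'[of "i3+2" j3 k3] ij3 by (simp cong: if_cong add: Z1 Z5 a9 a7 a8 a5)
    hence "(of_nat k3 * complex_of_real a) * mcoeff f i3 j3 k3 = \<alpha>4 * mcoeff f i3 j3 k3"
      by (cases "k3 = 0") (simp_all add: mult.assoc mult.left_commute)
    thus ?thesis using ij3(1) by (metis mult_right_cancel)
  qed
  show ?thesis using a4 a5 a6 a7 a8 a9 by blast
qed

end
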